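(* Let $\mathcal L$ be the Laplacian mechanism, let $c_1,\ldots,c_n>0$, and let the contract functions be $W_i(\varepsilon)=c_i\varepsilon$ for $i=1,\ldots,n$. Define micro-payments $\mu_i(\mathbf Q)=\frac{\gamma c_i}{\sqrt{v/2}}|q_i|$ for $\mathbf Q=(\mathbf q,v)$, $i=1,\ldots,n$. Then $(\boldsymbol\varepsilon,\boldsymbol\mu,\mathbf W)$ is semi-balanced: each $\mu_i$ is fair, micro arbitrage-free, and compensating for $W_i$ with respect to $\mathcal L$.
   Context: Fix a bounded set $X\subseteq\mathbb R$ and let $\gamma=\sup_{x\in X}|x|$. Databases are vectors $\mathbf x\in X^n$; $\mathbf x^{(i)}$ is $\mathbf x$ with the $i$-th coordinate replaced by $0$. Queries are pairs $\mathbf Q=(\mathbf q,v)$ with $\mathbf q\in\mathbb R^n$ and $v\in(0,\infty)$. The Laplacian mechanism answers $\mathbf Q$ by $\mathcal L_{\mathbf Q}(\mathbf x)=\mathbf q\cdot\mathbf x+\rho$, where $\rho$ has the Laplace density $\frac{1}{2b}e^{-|t|/b}$ with $b=\sqrt{v/2}$. The privacy loss of item $i$ is $\varepsilon_i(\mathcal L_{\mathbf Q})=\sup_{S,\mathbf x}\left|\log\frac{\Pr[\mathcal L_{\mathbf Q}(\mathbf x)\in S]}{\Pr[\mathcal L_{\mathbf Q}(\mathbf x^{(i)})\in S]}\right|$ over $\mathbf x\in X^n$ and measurable $S\subseteq\mathbb R$. The determinacy relation $\mathbf S\rightarrow\mathbf Q$ (finite multisets of queries to queries) is the smallest relation satisfying: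 (Summation) $\{(\mathbf q_1,v_1),\ldots,(\mathbf q_k,v_k)\}\rightarrow(\sum_j\mathbf q_j,\sum_jv_j)$; (Scalar multiplication) $\{(\mathbf q,v)\}\rightarrow(c\mathbf q,c^2v)$ for $c\in\mathbb R$; (Relaxation) $\{(\mathbf q,v)\}\rightarrow(\mathbf q,v')$ for $v\le v'$; (Transitivity) if $\mathbf S_j\rightarrow\mathbf Q_j$ for $j=1,\ldots,k$ and $\{\mathbf Q_1,\ldots,\mathbf Q_k\}\rightarrow\mathbf Q$ then $\mathbf S_1\uplus\cdots\uplus\mathbf S_k\rightarrow\mathbf Q$. A function $\mu$ from queries to $[0,\infty]$ is arbitrage-free if for every $m\ge 1$ and queries with $\{\mathbf Q_1,\ldots,\mathbf Q_m\}\rightarrow\mathbf Q$, $\mu(\mathbf Q)\le\sum_j\mu(\mathbf Q_j)$. A micro-payment $\mu_i$ is fair if $q_i=0$ implies $\mu_i(\mathbf q,v)=0$; micro arbitrage-free if $\mu_i$ is arbitrage-free; compensating for the contract $W_i$ (w.r.t. mechanism $\mathcal L$) if $\mu_i(\mathbf Q)\ge W_i(\varepsilon_i(\mathcal L_{\mathbf Q}))$ for every query $\mathbf Q$. *)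

theory Defs
  imports "HOL-Probability.Probability"
begin

text \<open>Indices 1..n are the elements of the finite type 'n; vectors in R^n are real^'n.
  A query is a pair (q, v); it is a genuine query iff v > 0.\<close>

type_synonym 'n query = "(real ^ 'n) \<times> real"

definition is_query :: "'n query \<Rightarrow> bool" where
  "is_query Q \<longleftrightarrow> snd Q > 0"

definition gamma :: "real set \<Rightarrow> real" where
  "gamma X = (SUP x\<in>X. \<bar>x\<bar>)"

definition databases :: "real set \<Rightarrow> (real ^ 'n::finite) set" where
  "databases X = {x. \<forall>j. x $ j \<in> X}"

definition zero_at :: "real ^ 'n \<Rightarrow> 'n \<Rightarrow> real ^ 'n" where
  "zero_at x i = (\<chi> j. if j = i then 0 else x $ j)"

definition laplace_density :: "real \<Rightarrow> real \<Rightarrow> real" where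
  "laplace_density b t = exp (- \<bar>t\<bar> / b) / (2 * b)"

definition laplace_mech :: "('n::finite) query \<Rightarrow> real ^ 'n \<Rightarrow> real measure" where
  "laplace_mech Q x = density lborel
     (\<lambda>t. ennreal (laplace_density (sqrt (snd Q / 2)) (t - fst Q \<bullet> x)))"

text \<open>Privacy loss of item i. The supremum ranges over databases and measurable S
  for which the probabilities are positive (the log-ratio is undefined, 0/0, otherwise).\<close>
definition privacy_loss :: "real set \<Rightarrow> 'n::finite \<Rightarrow> 'n query \<Rightarrow> ennreal" where
  "privacy_loss X i Q = (SUP p \<in> {(x, S). x \<in> databases X \<and> S \<in> sets borel
        \<and> measure (laplace_mech Q x) S > 0 \<and> measure (laplace_mech Q (zero_at x i)) S > 0}.
      ennreal \<bar>ln (measure (laplace_mech Q (fst p)) (snd p)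
                   / measure (laplace_mech Q (zero_at (fst p) i)) (snd p))\<bar>)"

inductive determines :: "('n::finite) query multiset \<Rightarrow> 'n query \<Rightarrow> bool" where
  summation: "S \<noteq> {#} \<Longrightarrow> (\<forall>Q\<in>#S. is_query Q) \<Longrightarrow>
     determines S (sum_mset (image_mset fst S), sum_mset (image_mset snd S))"
| scalar: "is_query (q, v) \<Longrightarrow> c \<noteq> 0 \<Longrightarrow> determines {#(q, v)#} (c *\<^sub>R q, c\<^sup>2 * v)"
| relax: "is_query (q, v) \<Longrightarrow> v \<le> v' \<Longrightarrow> determines {#(q, v)#} (q, v')"
| trans: "(\<forall>p\<in>set Ps. determines (fst p) (snd p)) \<Longrightarrow> determines (mset (map snd Ps)) Q \<Longrightarrow>
     determines (sum_list (map fst Ps)) Q"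

definition arbitrage_free :: "(('n::finite) query \<Rightarrow> ennreal) \<Rightarrow> bool" where
  "arbitrage_free \<mu> \<longleftrightarrow> (\<forall>Qs Q. length Qs \<ge> 1 \<and> (\<forall>Q'\<in>set Qs. is_query Q') \<and> is_query Q
      \<and> determines (mset Qs) Q \<longrightarrow> \<mu> Q \<le> sum_list (map \<mu> Qs))"

definition fair :: "'n::finite \<Rightarrow> ('n query \<Rightarrow> ennreal) \<Rightarrow> bool" where
  "fair i \<mu> \<longleftrightarrow> (\<forall>q v. is_query (q, v) \<and> q $ i = 0 \<longrightarrow> \<mu> (q, v) = 0)"

definition compensating :: "real set \<Rightarrow> 'n::finite \<Rightarrow> (ennreal \<Rightarrow> ennreal) \<Rightarrow> ('n query \<Rightarrow> ennreal) \<Rightarrow> bool" where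
  "compensating X i W \<mu> \<longleftrightarrow> (\<forall>Q. is_query Q \<longrightarrow> W (privacy_loss X i Q) \<le> \<mu> Q)"

end

theory Submission
  imports Defs
begin


lemma sum_mset_nonneg_gen: "(\<forall>x\<in>#S. 0 \<le> (g x::real)) \<Longrightarrow> 0 \<le> sum_mset (image_mset g S)"
  by (induction S) auto

lemma mem_sum_list_mset: "x \<in># sum_list Ms \<Longrightarrow> \<exists>M\<in>set Ms. x \<in># M"
  by (induction Ms) auto

lemma ennreal_sum_mset:
  assumes "\<forall>x\<in>#S. g x \<ge> 0"
  shows "sum_mset (image_mset (\<lambda>x. ennreal (g x)) S) = ennreal (sum_mset (image_mset g S))"
  using assms
proof (induction S)
  case empty then show ?case by simp
next
  case (add x S)
  have "0 \<le> sum_mset (image_mset g S)" using add.prems by (intro sum_mset_nonneg_gen) auto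
  then show ?case using add by (simp add: ennreal_plus)
qed

lemma snd_sum_nonneg: "(\<forall>Q\<in>#S. is_query Q) \<Longrightarrow> 0 \<le> sum_mset (image_mset snd (S :: ('n::finite) query multiset))"
  by (induction S) (auto simp: is_query_def)

lemma summation_real:
  fixes S :: "('n::finite) query multiset"
  assumes "K \<ge> 0" "\<forall>Q\<in>#S. is_query Q" "V \<ge> sum_mset (image_mset snd S)"
  shows "K / sqrt (V/2) * \<bar>sum_mset (image_mset fst S) $ i\<bar>
     \<le> sum_mset (image_mset (\<lambda>Q. K / sqrt (snd Q / 2) * \<bar>fst Q $ i\<bar>) S)"
  using assms(2,3)
proof (induction S arbitrary: V)
  case empty then show ?case by simp
next
  case (add x S)
  obtain q v where x: "x = (q, v)" by force
  have v: "v > 0" using add.prems x by (auto simp: is_query_def)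
  have S0: "0 \<le> sum_mset (image_mset snd S)" using add.prems snd_sum_nonneg by auto
  have V1: "V \<ge> sum_mset (image_mset snd S)" using add.prems x v by auto
  have Vv: "V \<ge> v" using add.prems x S0 by auto
  have IH: "K / sqrt (V/2) * \<bar>sum_mset (image_mset fst S) $ i\<bar>
     \<le> sum_mset (image_mset (\<lambda>Q. K / sqrt (snd Q / 2) * \<bar>fst Q $ i\<bar>) S)"
    using add.IH add.prems V1 by auto
  have c1: "K / sqrt (V/2) \<le> K / sqrt (v/2)"
    using Vv v assms(1) by (intro divide_left_mono) auto
  have "K / sqrt (V/2) * \<bar>sum_mset (image_mset fst (add_mset x S)) $ i\<bar>
      \<le> K / sqrt (V/2) * \<bar>sum_mset (image_mset fst S) $ i\<bar> + K / sqrt (V/2) * \<bar>q $ i\<bar>"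
  proof -
    have t: "\<bar>q$i + sum_mset (image_mset fst S) $ i\<bar> \<le> \<bar>sum_mset (image_mset fst S) $ i\<bar> + \<bar>q$i\<bar>" by arith
    have "K / sqrt (V/2) * \<bar>q$i + sum_mset (image_mset fst S) $ i\<bar> \<le> K / sqrt (V/2) * (\<bar>sum_mset (image_mset fst S) $ i\<bar> + \<bar>q$i\<bar>)"
      using t assms(1) Vv v by (intro mult_left_mono) auto
    then show ?thesis using x by (simp add: distrib_left)
  qed
  also have "\<dots> \<le> sum_mset (image_mset (\<lambda>Q. K / sqrt (snd Q / 2) * \<bar>fst Q $ i\<bar>) S) + K / sqrt (v/2) * \<bar>q $ i\<bar>"
    using IH c1 by (intro add_mono mult_right_mono) auto
  finally show ?case using x by (simp add: add.commute)
qed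

lemma trans_sum:
  "(\<forall>p\<in>set Ps. \<mu> (snd p) \<le> sum_mset (image_mset (\<mu>::_\<Rightarrow>ennreal) (fst p))) \<Longrightarrow>
   sum_mset (image_mset \<mu> (mset (map snd Ps))) \<le> sum_mset (image_mset \<mu> (sum_list (map fst Ps)))"
  by (induction Ps) (auto intro: add_mono)

lemma det_main:
  fixes \<mu> :: "('n::finite) query \<Rightarrow> ennreal"
  assumes K: "K \<ge> 0" and mu: "\<And>q v. \<mu> (q, v) = ennreal (K / sqrt (v/2) * \<bar>q $ i\<bar>)"
  shows "determines S Q \<Longrightarrow> S \<noteq> {#} \<and> (\<forall>Q\<in>#S. is_query Q) \<and> is_query Q
     \<and> \<mu> Q \<le> sum_mset (image_mset \<mu> S)"
proof (induction rule: determines.induct)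
  case (summation S)
  have pos: "0 < sum_mset (image_mset snd S)"
    using summation proof (induction S)
      case (add x S) then show ?case by (cases "S = {#}") (auto simp: is_query_def intro: add_pos_pos)
    qed simp
  have mu': "\<mu> = (\<lambda>Q. ennreal (K / sqrt (snd Q / 2) * \<bar>fst Q $ i\<bar>))"
    using mu by (auto simp: fun_eq_iff)
  have "ennreal (K / sqrt (sum_mset (image_mset snd S)/2) * \<bar>sum_mset (image_mset fst S) $ i\<bar>)
     \<le> ennreal (sum_mset (image_mset (\<lambda>Q. K / sqrt (snd Q / 2) * \<bar>fst Q $ i\<bar>) S))"
    using summation_real[OF K summation(2) order_refl] by (rule ennreal_leI)
  also have "\<dots> = sum_mset (image_mset \<mu> S)"
    unfolding mu' using K summation(2) by (subst ennreal_sum_mset[symmetric]) (auto simp: is_query_def)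
  finally show ?case using summation pos by (simp add: mu is_query_def)
next
  case (scalar q v c)
  have "sqrt (c\<^sup>2 * v / 2) = \<bar>c\<bar> * sqrt (v/2)"
  proof -
    have "c\<^sup>2 * v / 2 = c\<^sup>2 * (v/2)" by simp
    then show ?thesis by (simp only: real_sqrt_mult real_sqrt_abs)
  qed
  then show ?case using scalar by (simp add: mu is_query_def abs_mult)
next
  case (relax q v v')
  have "K / sqrt (v'/2) * \<bar>q $ i\<bar> \<le> K / sqrt (v/2) * \<bar>q $ i\<bar>"
    using relax K by (intro mult_right_mono divide_left_mono) (auto simp: is_query_def)
  then show ?case using relax by (auto simp: mu is_query_def intro: ennreal_leI)
next
  case (trans Ps Q)
  have ne: "Ps \<noteq> []" using trans by auto
  have "sum_list (map fst Ps) \<noteq> {#}"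
    using ne trans(1) by (cases Ps) auto
  moreover have "\<forall>Q\<in>#sum_list (map fst Ps). is_query Q"
    using trans(1) by (force dest: mem_sum_list_mset)
  moreover have "\<mu> Q \<le> sum_mset (image_mset \<mu> (sum_list (map fst Ps)))"
    using trans(2) trans_sum[of Ps \<mu>] trans(1) order_trans by blast
  ultimately show ?case using trans by blast
qed


lemma lap_pointwise:
  assumes b: "b > 0"
  shows "laplace_density b (t - a) \<le> exp (\<bar>a - a'\<bar> / b) * laplace_density b (t - a')"
proof -
  have "-\<bar>t - a\<bar> \<le> \<bar>a - a'\<bar> - \<bar>t - a'\<bar>" by arith
  then have "(-\<bar>t - a\<bar>) / b \<le> (\<bar>a - a'\<bar> - \<bar>t - a'\<bar>) / b" using b by (intro divide_right_mono) auto
  then have "- \<bar>t - a\<bar> / b \<le> \<bar>a - a'\<bar> / b + - \<bar>t - a'\<bar> / b"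
    by (simp add: diff_divide_distrib)
  then have "exp (- \<bar>t - a\<bar> / b) \<le> exp (\<bar>a - a'\<bar> / b) * exp (- \<bar>t - a'\<bar> / b)"
    by (simp flip: exp_add)
  then show ?thesis using b unfolding laplace_density_def
    by (simp add: divide_right_mono mult.assoc)
qed

lemma lap_meas: "(\<lambda>t. ennreal (laplace_density b (t - a))) \<in> borel_measurable borel"
  unfolding laplace_density_def by measurable

lemma shift_meas:
  assumes b: "b > 0" and S: "S \<in> sets borel"
    and p2: "measure (density lborel (\<lambda>t. ennreal (laplace_density b (t - a')))) S > 0"
  shows "measure (density lborel (\<lambda>t. ennreal (laplace_density b (t - a)))) S
       \<le> exp (\<bar>a - a'\<bar> / b) * measure (density lborel (\<lambda>t. ennreal (laplace_density b (t - a')))) S"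
proof -
  define E where "E = exp (\<bar>a - a'\<bar> / b)"
  define M1 where "M1 = density lborel (\<lambda>t. ennreal (laplace_density b (t - a)))"
  define M2 where "M2 = density lborel (\<lambda>t. ennreal (laplace_density b (t - a')))"
  have S': "S \<in> sets lborel" using S by simp
  have e1: "emeasure M1 S = (\<integral>\<^sup>+ t. ennreal (laplace_density b (t - a)) * indicator S t \<partial>lborel)"
    unfolding M1_def using S' lap_meas by (subst emeasure_density) auto
  have e2: "emeasure M2 S = (\<integral>\<^sup>+ t. ennreal (laplace_density b (t - a')) * indicator S t \<partial>lborel)"
    unfolding M2_def using S' lap_meas by (subst emeasure_density) auto
  have "emeasure M1 S \<le> (\<integral>\<^sup>+ t. ennreal E * (ennreal (laplace_density b (t - a')) * indicator S t) \<partial>lborel)"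
    unfolding e1
  proof (rule nn_integral_mono)
    fix t
    have "laplace_density b (t - a') \<ge> 0" using b by (simp add: laplace_density_def)
    then have "ennreal (laplace_density b (t - a)) \<le> ennreal E * ennreal (laplace_density b (t - a'))"
      using lap_pointwise[OF b, of t a a'] by (simp add: E_def ennreal_mult[symmetric] ennreal_leI)
    then show "ennreal (laplace_density b (t - a)) * indicator S t
        \<le> ennreal E * (ennreal (laplace_density b (t - a')) * indicator S t)"
      by (cases "t \<in> S") (auto simp: mult.assoc)
  qed
  also have "\<dots> = ennreal E * emeasure M2 S"
    unfolding e2 using S lap_meas[of b a'] by (intro nn_integral_cmult) (auto intro!: borel_measurable_times_ennreal borel_measurable_indicator)
  finally have le: "emeasure M1 S \<le> ennreal E * emeasure M2 S" .
  have fin2: "emeasure M2 S \<noteq> \<infinity>"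
    using p2 unfolding M2_def[symmetric] by (auto simp: measure_def)
  then obtain m2 where m2: "emeasure M2 S = ennreal m2" "m2 \<ge> 0"
    by (cases "emeasure M2 S") auto
  have "measure M2 S = m2" using m2 by (simp add: measure_def)
  have E0: "E \<ge> 0" by (simp add: E_def)
  have le': "emeasure M1 S \<le> ennreal (E * m2)" using le m2 E0 by (simp add: ennreal_mult)
  then have "measure M1 S \<le> E * m2" unfolding measure_def
    using E0 m2 le' by (intro enn2real_leI) auto
  then show ?thesis using \<open>measure M2 S = m2\<close> unfolding M1_def M2_def E_def by simp
qed



lemma inner_zero_at: "q \<bullet> x - q \<bullet> zero_at x i = q $ i * x $ i"
proof -
  have "q \<bullet> x - q \<bullet> zero_at x i = (\<Sum>j\<in>UNIV. q $ j * (x $ j - zero_at x i $ j))"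
    by (simp add: inner_vec_def sum_subtractf[symmetric] right_diff_distrib)
  also have "\<dots> = (\<Sum>j\<in>UNIV. if j = i then q $ i * x $ i else 0)"
    by (rule sum.cong) (auto simp: zero_at_def)
  finally show ?thesis by simp
qed

lemma log_bound:
  fixes m1 m2 d :: real
  assumes "m1 > 0" "m2 > 0" "m1 \<le> exp d * m2" "m2 \<le> exp d * m1"
  shows "\<bar>ln (m1 / m2)\<bar> \<le> d"
proof -
  have "ln m1 \<le> ln (exp d * m2)" using assms by (subst ln_le_cancel_iff) auto
  also have "\<dots> = d + ln m2" using assms by (simp add: ln_mult)
  finally have 1: "ln m1 \<le> d + ln m2" .
  have "ln m2 \<le> ln (exp d * m1)" using assms by (subst ln_le_cancel_iff) auto
  also have "\<dots> = d + ln m1" using assms by (simp add: ln_mult)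
  finally have 2: "ln m2 \<le> d + ln m1" .
  show ?thesis using 1 2 assms by (simp add: ln_div)
qed

lemma gamma_bound:
  assumes "bounded X" "y \<in> X"
  shows "\<bar>y\<bar> \<le> gamma X"
proof -
  obtain B where B: "\<forall>x\<in>X. norm x \<le> B" using assms(1) bounded_iff by blast
  have "bdd_above (abs ` X)" using B by (intro bdd_aboveI[of _ B]) auto
  then show ?thesis unfolding gamma_def using assms(2) by (rule cSUP_upper[rotated])
qed

lemma privacy_bound:
  assumes X: "bounded X" and v: "v > 0"
  shows "privacy_loss X i (q, v) \<le> ennreal (gamma X * \<bar>q $ i\<bar> / sqrt (v / 2))"
  unfolding privacy_loss_def
proof (rule SUP_least, clarify)
  fix x S
  assume x: "x \<in> databases X" and S: "S \<in> sets borel"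
    and p1: "0 < measure (laplace_mech (q, v) x) S"
    and p2: "0 < measure (laplace_mech (q, v) (zero_at x i)) S"
  define b where "b = sqrt (v/2)"
  have b: "b > 0" using v by (simp add: b_def)
  define a where "a = q \<bullet> x"
  define a' where "a' = q \<bullet> zero_at x i"
  have L1: "laplace_mech (q, v) x = density lborel (\<lambda>t. ennreal (laplace_density b (t - a)))"
    by (simp add: laplace_mech_def a_def b_def)
  have L2: "laplace_mech (q, v) (zero_at x i) = density lborel (\<lambda>t. ennreal (laplace_density b (t - a')))"
    by (simp add: laplace_mech_def a'_def b_def)
  have ai: "\<bar>a - a'\<bar> = \<bar>q $ i\<bar> * \<bar>x $ i\<bar>"
    unfolding a_def a'_def inner_zero_at by (simp add: abs_mult)
  have "\<bar>ln (measure (laplace_mech (q, v) x) S / measure (laplace_mech (q, v) (zero_at x i)) S)\<bar>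
      \<le> \<bar>a - a'\<bar> / b"
    unfolding L1 L2
    apply (rule log_bound)
    using p1 p2 unfolding L1 L2
       apply simp_all
    using shift_meas[OF b S, of a' a] shift_meas[OF b S, of a a'] p1 p2 unfolding L1 L2
    by (auto simp: abs_minus_commute)
  also have "\<dots> \<le> gamma X * \<bar>q $ i\<bar> / b"
  proof -
    have "\<bar>x $ i\<bar> \<le> gamma X" using gamma_bound[OF X, of "x $ i"] x by (auto simp: databases_def)
    then have "\<bar>q $ i\<bar> * \<bar>x $ i\<bar> \<le> \<bar>q $ i\<bar> * gamma X" by (intro mult_left_mono) auto
    then show ?thesis unfolding ai using b by (intro divide_right_mono) (auto simp: mult.commute)
  qed
  finally show "ennreal \<bar>ln (measure (laplace_mech (q, v) (fst (x, S))) (snd (x, S)) /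
                  measure (laplace_mech (q, v) (zero_at (fst (x, S)) i)) (snd (x, S)))\<bar>
       \<le> ennreal (gamma X * \<bar>q $ i\<bar> / sqrt (v / 2))"
    unfolding b_def by (simp add: ennreal_leI)
qed


theorem proposition9:
  fixes X :: "real set" and c :: "'n::finite \<Rightarrow> real"
    and W :: "'n \<Rightarrow> ennreal \<Rightarrow> ennreal" and \<mu> :: "'n \<Rightarrow> 'n query \<Rightarrow> ennreal"
  assumes "bounded X"
    and "\<And>i. c i > 0"
    and "\<And>i e. W i e = ennreal (c i) * e"
    and "\<And>i q v. \<mu> i (q, v) = ennreal (gamma X * c i / sqrt (v / 2) * \<bar>q $ i\<bar>)"
  shows "\<forall>i. fair i (\<mu> i) \<and> arbitrage_free (\<mu> i) \<and> compensating X i (W i) (\<mu> i)"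
proof (intro allI conjI)
  fix i
  show "fair i (\<mu> i)" unfolding fair_def using assms(4) by simp
  show "arbitrage_free (\<mu> i)" unfolding arbitrage_free_def
  proof (intro allI impI)
    fix Qs and Q :: "'n query"
    assume H: "length Qs \<ge> 1 \<and> (\<forall>Q'\<in>set Qs. is_query Q') \<and> is_query Q \<and> determines (mset Qs) Q"
    show "\<mu> i Q \<le> sum_list (map (\<mu> i) Qs)"
    proof (cases "gamma X * c i \<ge> 0")
      case True
      have "\<mu> i Q \<le> sum_mset (image_mset (\<mu> i) (mset Qs))"
        using det_main[OF True assms(4), of "mset Qs" Q] H by blast
      then show ?thesis by (simp add: sum_mset_sum_list flip: mset_map)
    next
      case False
      obtain q v where Q: "Q = (q, v)" by force
      have "v > 0" using H Q by (simp add: is_query_def)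
      then have "gamma X * c i / sqrt (v / 2) \<le> 0" using False
        by (simp add: divide_nonpos_pos)
      then have "gamma X * c i / sqrt (v / 2) * \<bar>q $ i\<bar> \<le> 0"
        by (rule mult_nonpos_nonneg) simp
      then have "\<mu> i Q = 0" using Q assms(4) by (simp add: ennreal_eq_0_iff)
      then show ?thesis by simp
    qed
  qed
  show "compensating X i (W i) (\<mu> i)" unfolding compensating_def
  proof (intro allI impI)
    fix Q :: "'n query"
    assume "is_query Q"
    obtain q v where Q: "Q = (q, v)" by force
    have v: "v > 0" using \<open>is_query Q\<close> Q by (simp add: is_query_def)
    have "W i (privacy_loss X i Q) \<le> ennreal (c i) * ennreal (gamma X * \<bar>q $ i\<bar> / sqrt (v / 2))"
      unfolding assms(3) Q using privacy_bound[OF assms(1) v] by (intro mult_left_mono) auto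
    also have "\<dots> = ennreal (c i * (gamma X * \<bar>q $ i\<bar> / sqrt (v / 2)))"
      using assms(2)[of i] by (subst ennreal_mult') auto
    also have "\<dots> = \<mu> i Q" unfolding Q assms(4) by (simp add: field_simps)
    finally show "W i (privacy_loss X i Q) \<le> \<mu> i Q" .
  qed
qed

end
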